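(* Let $n\ge 1$, $d\ge 2$ and $k_1,\dots,k_n\in\{1,\dots,d\}$. Let $\rho$ be a state on $(\mathbb{C}^d)^{\otimes n}$ that can be written as $\rho=\sum_j p_j|\psi_j\rangle\langle\psi_j|$ with $p_j\ge 0$, $\sum_j p_j=1$, where for every $j$ and every $i\in\{1,\dots,n\}$ the single-party reduced state $\mathrm{Tr}_{\overline{\{i\}}}|\psi_j\rangle\langle\psi_j|$ has rank at most $k_i$. Then $$\mathcal{C}_2(\rho)\le d^n+n-1-\sum_{i=1}^n\frac{d}{k_i}.$$
   Context: Consider $n$ qudits with Hilbert space $(\mathbb{C}^d)^{\otimes n}$. Let $\lambda_0=\mathbb{1}_d$ and let $\lambda_1,\dots,\lambda_{d^2-1}$ be Hermitian traceless $d\times d$ matrices normalized so that $\mathrm{Tr}[\lambda_i\lambda_j]=d\,\delta_{ij}$. For a nonempty subset $\alpha\subseteq\{1,\dots,n\}$ and a state $\rho$ with reduced state $\rho_\alpha$, define $\|\tau_\alpha(\rho)\|^2=\sum_{(i_k)_{k\in\alpha}\in\{1,\dots,d^2-1\}^{\alpha}}\big(\mathrm{Tr}[\rho_\alpha\bigotimes_{k\in\alpha}\lambda_{i_k}]\big)^2$, and $\mathcal{C}_2(\rho)=\sum_{|\alpha|\ge 2}\|\tau_\alpha(\rho)\|^2$. *)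

theory Defs
  imports Complex_Main "HOL-Library.FuncSet" "Jordan_Normal_Form.DL_Rank"
begin

text \<open>Computational basis configurations of the qudits in a set A of sites:
  functions A -> {0..<d} (undefined outside A).\<close>
definition configs :: "nat set \<Rightarrow> nat \<Rightarrow> (nat \<Rightarrow> nat) set" where
  "configs A d = PiE A (\<lambda>_. {..<d})"

definition merge :: "nat set \<Rightarrow> (nat \<Rightarrow> nat) \<Rightarrow> (nat \<Rightarrow> nat) \<Rightarrow> (nat \<Rightarrow> nat)" where
  "merge A x z = (\<lambda>i. if i \<in> A then x i else z i)"

text \<open>Operators on (C^d)^(tensor n), sites 1..n, as kernels on configurations.
  Reduced state on alpha: partial trace over the complement of alpha.\<close>
definition reduced :: "nat \<Rightarrow> nat \<Rightarrow> ((nat \<Rightarrow> nat) \<Rightarrow> (nat \<Rightarrow> nat) \<Rightarrow> complex)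
    \<Rightarrow> nat set \<Rightarrow> (nat \<Rightarrow> nat) \<Rightarrow> (nat \<Rightarrow> nat) \<Rightarrow> complex" where
  "reduced n d rho A x y = (\<Sum>z\<in>configs ({1..n} - A) d. rho (merge A x z) (merge A y z))"

text \<open>Tr[rho_alpha (tensor over k in alpha of lam (I k))].\<close>
definition corr :: "nat \<Rightarrow> nat \<Rightarrow> (nat \<Rightarrow> nat \<Rightarrow> nat \<Rightarrow> complex)
    \<Rightarrow> ((nat \<Rightarrow> nat) \<Rightarrow> (nat \<Rightarrow> nat) \<Rightarrow> complex) \<Rightarrow> nat set \<Rightarrow> (nat \<Rightarrow> nat) \<Rightarrow> complex" where
  "corr n d lam rho A I =
     (\<Sum>x\<in>configs A d. \<Sum>y\<in>configs A d.
        reduced n d rho A x y * (\<Prod>k\<in>A. lam (I k) (y k) (x k)))"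

text \<open>||tau_alpha(rho)||^2 (the traces are real since lam, rho are Hermitian).\<close>
definition tau_sq :: "nat \<Rightarrow> nat \<Rightarrow> (nat \<Rightarrow> nat \<Rightarrow> nat \<Rightarrow> complex)
    \<Rightarrow> ((nat \<Rightarrow> nat) \<Rightarrow> (nat \<Rightarrow> nat) \<Rightarrow> complex) \<Rightarrow> nat set \<Rightarrow> real" where
  "tau_sq n d lam rho A = (\<Sum>I\<in>PiE A (\<lambda>_. {1..d\<^sup>2 - 1}). (Re (corr n d lam rho A I))\<^sup>2)"

definition C2 :: "nat \<Rightarrow> nat \<Rightarrow> (nat \<Rightarrow> nat \<Rightarrow> nat \<Rightarrow> complex)
    \<Rightarrow> ((nat \<Rightarrow> nat) \<Rightarrow> (nat \<Rightarrow> nat) \<Rightarrow> complex) \<Rightarrow> real" where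
  "C2 n d lam rho = (\<Sum>A\<in>{A. A \<subseteq> {1..n} \<and> card A \<ge> 2}. tau_sq n d lam rho A)"

definition gm_basis :: "nat \<Rightarrow> (nat \<Rightarrow> nat \<Rightarrow> nat \<Rightarrow> complex) \<Rightarrow> bool" where
  "gm_basis d lam \<longleftrightarrow>
     (\<forall>i\<in>{1..d\<^sup>2 - 1}. (\<forall>a<d. \<forall>b<d. lam i b a = cnj (lam i a b)) \<and> (\<Sum>a<d. lam i a a) = 0) \<and>
     (\<forall>i\<in>{1..d\<^sup>2 - 1}. \<forall>j\<in>{1..d\<^sup>2 - 1}.
        (\<Sum>a<d. \<Sum>b<d. lam i a b * lam j b a) = (if i = j then of_nat d else 0))"

definition proj :: "((nat \<Rightarrow> nat) \<Rightarrow> complex) \<Rightarrow> (nat \<Rightarrow> nat) \<Rightarrow> (nat \<Rightarrow> nat) \<Rightarrow> complex" where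
  "proj psi x y = psi x * cnj (psi y)"

definition pt :: "nat \<Rightarrow> nat \<Rightarrow> (nat \<Rightarrow> nat)" where
  "pt i a = (\<lambda>k. if k = i then a else undefined)"

definition single_red :: "nat \<Rightarrow> nat \<Rightarrow> ((nat \<Rightarrow> nat) \<Rightarrow> (nat \<Rightarrow> nat) \<Rightarrow> complex) \<Rightarrow> nat \<Rightarrow> complex mat" where
  "single_red n d rho i = mat d d (\<lambda>(a, b). reduced n d rho {i} (pt i a) (pt i b))"

end

theory Submission
  imports Defs "Jordan_Normal_Form.Gram_Schmidt"
begin


definition Lam :: "(nat \<Rightarrow> nat \<Rightarrow> nat \<Rightarrow> complex) \<Rightarrow> nat \<Rightarrow> nat \<Rightarrow> nat \<Rightarrow> complex" where
  "Lam lam m a b = (if m = 0 then (if a = b then 1 else 0) else lam m a b)"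

lemma Lam_orth:
  assumes gm: "gm_basis d lam" and m: "m < d\<^sup>2" and v: "v < d\<^sup>2"
  shows "(\<Sum>a<d. \<Sum>b<d. Lam lam m a b * cnj (Lam lam v a b)) = (if m = v then of_nat d else 0)"
proof -
  have herm: "\<And>i a b. i \<in> {1..d\<^sup>2 - 1} \<Longrightarrow> a < d \<Longrightarrow> b < d \<Longrightarrow> cnj (lam i a b) = lam i b a"
    using gm unfolding gm_basis_def by (metis complex_cnj_cnj)
  have tr: "\<And>i. i \<in> {1..d\<^sup>2 - 1} \<Longrightarrow> (\<Sum>a<d. lam i a a) = 0"
    using gm unfolding gm_basis_def by blast
  have orth: "\<And>i j. i \<in> {1..d\<^sup>2 - 1} \<Longrightarrow> j \<in> {1..d\<^sup>2 - 1} \<Longrightarrow>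
        (\<Sum>a<d. \<Sum>b<d. lam i a b * lam j b a) = (if i = j then of_nat d else 0)"
    using gm unfolding gm_basis_def by blast
  have d1: "\<And>i. 0 < i \<Longrightarrow> i < d\<^sup>2 \<Longrightarrow> i \<in> {1..d\<^sup>2 - 1}" by auto
  show ?thesis
  proof (cases "m = 0")
    case True
    show ?thesis
    proof (cases "v = 0")
      case True
      have "\<And>a b. Lam lam m a b * cnj (Lam lam v a b) = (if a = b then 1 else 0)"
        using True \<open>m = 0\<close> by (simp add: Lam_def)
      then show ?thesis using True \<open>m = 0\<close> by simp
    next
      case False
      have "\<And>a b. Lam lam m a b * cnj (Lam lam v a b) = (if a = b then cnj (lam v a a) else 0)"
        using True False by (simp add: Lam_def)
      then have "(\<Sum>a<d. \<Sum>b<d. Lam lam m a b * cnj (Lam lam v a b)) = (\<Sum>a<d. cnj (lam v a a))"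
        by simp
      also have "\<dots> = cnj (\<Sum>a<d. lam v a a)" by simp
      also have "\<dots> = 0" using tr[OF d1] False v by simp
      finally show ?thesis using True False by simp
    qed
  next
    case False
    show ?thesis
    proof (cases "v = 0")
      case True
      have "\<And>a b. Lam lam m a b * cnj (Lam lam v a b) = (if a = b then lam m a a else 0)"
        using True False by (simp add: Lam_def)
      then have "(\<Sum>a<d. \<Sum>b<d. Lam lam m a b * cnj (Lam lam v a b)) = (\<Sum>a<d. lam m a a)"
        by simp
      also have "\<dots> = 0" using tr[OF d1] False m by simp
      finally show ?thesis using True False by simp
    next
      case False2: False
      have "(\<Sum>a<d. \<Sum>b<d. Lam lam m a b * cnj (Lam lam v a b)) = (\<Sum>a<d. \<Sum>b<d. lam m a b * lam v b a)"
        using False False2 herm[OF d1[OF _ v]] by (simp add: Lam_def)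
      also have "\<dots> = (if m = v then of_nat d else 0)" using orth[OF d1 d1] False False2 m v by simp
      finally show ?thesis .
    qed
  qed
qed

lemma sum_div_mod:
  fixes g :: "nat \<Rightarrow> nat \<Rightarrow> 'b::comm_monoid_add"
  shows "(\<Sum>p<d*d. g (p div d) (p mod d)) = (\<Sum>a<d. \<Sum>b<d. g a b)"
proof -
  have bij: "bij_betw (\<lambda>(a,b). a*d+b) ({..<d}\<times>{..<d}) {..<d*d}"
  proof (rule bij_betw_imageI)
    show "inj_on (\<lambda>(a,b). a*d+b) ({..<d}\<times>{..<d})"
    proof (clarsimp simp: inj_on_def)
      fix a b a' b' assume h: "a < d" "b < d" "a' < d" "b' < d" "a * d + b = a' * d + b'"
      have e1: "(a*d+b) div d = a" "(a*d+b) mod d = b" using h(1,2) by auto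
      have e2: "(a'*d+b') div d = a'" "(a'*d+b') mod d = b'" using h(3,4) by auto
      have "a = a'" using e1(1) e2(1) h(5) by simp
      moreover have "b = b'" using e1(2) e2(2) h(5) by simp
      ultimately show "a = a' \<and> b = b'" by simp
    qed
    show "(\<lambda>(a,b). a*d+b) ` ({..<d}\<times>{..<d}) = {..<d*d}"
    proof
      show "(\<lambda>(a,b). a*d+b) ` ({..<d}\<times>{..<d}) \<subseteq> {..<d*d}"
      proof clarsimp
        fix a b assume "a < d" "b < d"
        then have "a*d+b < a*d+d" by simp
        also have "\<dots> = (a+1)*d" by simp
        also have "\<dots> \<le> d*d" using \<open>a<d\<close> by (metis Suc_eq_plus1 Suc_leI mult.commute mult_le_mono2)
        finally show "a*d+b < d*d" .
      qed
      show "{..<d*d} \<subseteq> (\<lambda>(a,b). a*d+b) ` ({..<d}\<times>{..<d})"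
      proof
        fix p assume p: "p \<in> {..<d*d}"
        then have dpos: "d > 0" by (metis lessThan_iff mult_eq_0_iff not_gr0 not_less0)
        have "p = (p div d)*d + p mod d" by simp
        moreover have "p div d < d" using p by (simp add: less_mult_imp_div_less)
        moreover have "p mod d < d" using dpos by simp
        ultimately show "p \<in> (\<lambda>(a,b). a*d+b) ` ({..<d}\<times>{..<d})" by (metis (mono_tags, lifting) SigmaI case_prod_conv image_eqI lessThan_iff)
      qed
    qed
  qed
  have "(\<Sum>p<d*d. g (p div d) (p mod d)) = (\<Sum>(a,b)\<in>{..<d}\<times>{..<d}. g ((a*d+b) div d) ((a*d+b) mod d))"
    using sum.reindex_bij_betw[OF bij, of "\<lambda>p. g (p div d) (p mod d)"] by (simp add: case_prod_beta)
  also have "\<dots> = (\<Sum>(a,b)\<in>{..<d}\<times>{..<d}. g a b)"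
    by (rule sum.cong) auto
  also have "\<dots> = (\<Sum>a<d. \<Sum>b<d. g a b)" by (simp add: sum.cartesian_product)
  finally show ?thesis .
qed

lemma Lam_complete:
  assumes gm: "gm_basis d lam" and dpos: "d > 0"
    and ab: "a < d" "b < d" "a' < d" "b' < d"
  shows "(\<Sum>m<d\<^sup>2. cnj (Lam lam m a b) * Lam lam m a' b') = (if a = a' \<and> b = b' then of_nat d else 0)"
proof -
  define N where "N = d*d"
  have N2: "d\<^sup>2 = N" unfolding N_def by (simp add: power2_eq_square)
  define A :: "complex mat" where "A = mat N N (\<lambda>(m,p). Lam lam m (p div d) (p mod d))"
  define B :: "complex mat" where "B = mat N N (\<lambda>(p,v). cnj (Lam lam v (p div d) (p mod d)) / of_nat d)"
  have A: "A \<in> carrier_mat N N" and B: "B \<in> carrier_mat N N" unfolding A_def B_def by auto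
  have "A * B = 1\<^sub>m N"
  proof (rule eq_matI)
    fix m v assume mv: "m < dim_row (1\<^sub>m N)" "v < dim_col (1\<^sub>m N)"
    then have m: "m < N" and v: "v < N" by auto
    have "(A * B) $$ (m, v) = (\<Sum>p<N. A $$ (m,p) * B $$ (p, v))"
      using A B m v by (simp add: scalar_prod_def lessThan_atLeast0)
    also have "\<dots> = (\<Sum>p<d*d. Lam lam m (p div d) (p mod d) * cnj (Lam lam v (p div d) (p mod d)) / of_nat d)"
      unfolding A_def B_def N_def using m v by (intro sum.cong) (auto simp: N_def)
    also have "\<dots> = (\<Sum>a<d. \<Sum>b<d. Lam lam m a b * cnj (Lam lam v a b) / of_nat d)"
      by (rule sum_div_mod)
    also have "\<dots> = (\<Sum>a<d. \<Sum>b<d. Lam lam m a b * cnj (Lam lam v a b)) / of_nat d"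
      by (simp add: sum_divide_distrib)
    also have "\<dots> = (if m = v then 1 else 0)"
      using Lam_orth[OF gm, of m v] m v dpos N2 by simp
    finally show "(A * B) $$ (m, v) = 1\<^sub>m N $$ (m, v)" using m v by simp
  qed (auto simp: A_def B_def)
  then have BA: "B * A = 1\<^sub>m N" using mat_mult_left_right_inverse[OF A B] by blast
  define p where "p = a*d+b"
  define q where "q = a'*d+b'"
  have pq: "p div d = a" "p mod d = b" "q div d = a'" "q mod d = b'" using ab unfolding p_def q_def by auto
  have lt: "x*d+y < d*d" if "x < d" "y < d" for x y
  proof -
    have "x*d+y < x*d+d" using that by simp
    also have "\<dots> = (x+1)*d" by simp
    also have "\<dots> \<le> d*d" using that by (intro mult_le_mono1) simp
    finally show ?thesis .
  qed
  have "p < N" "q < N" unfolding p_def q_def N_def using ab lt by auto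
  have "(B * A) $$ (p, q) = (\<Sum>m<N. B $$ (p,m) * A $$ (m, q))"
    using A B \<open>p < N\<close> \<open>q < N\<close> by (simp add: scalar_prod_def lessThan_atLeast0)
  also have "\<dots> = (\<Sum>m<d\<^sup>2. cnj (Lam lam m a b) * Lam lam m a' b') / of_nat d"
    unfolding A_def B_def N2[symmetric] using \<open>p < N\<close> \<open>q < N\<close> N2
    by (simp add: pq sum_divide_distrib)
  finally have "(\<Sum>m<d\<^sup>2. cnj (Lam lam m a b) * Lam lam m a' b') = of_nat d * (B * A) $$ (p, q)"
    using dpos by simp
  also have "\<dots> = (if a = a' \<and> b = b' then of_nat d else 0)"
    unfolding BA using \<open>p < N\<close> \<open>q < N\<close> pq by (auto simp: p_def q_def)
  finally show ?thesis .
qed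



lemma cs_real:
  fixes f g :: "'a \<Rightarrow> real"
  assumes "finite A"
  shows "(\<Sum>i\<in>A. f i * g i)\<^sup>2 \<le> (\<Sum>i\<in>A. (f i)\<^sup>2) * (\<Sum>i\<in>A. (g i)\<^sup>2)"
proof -
  have "0 \<le> (\<Sum>i\<in>A. \<Sum>j\<in>A. (f i * g j - f j * g i)\<^sup>2)" by (intro sum_nonneg) auto
  also have "\<dots> = (\<Sum>i\<in>A. \<Sum>j\<in>A. (f i)\<^sup>2 * (g j)\<^sup>2 + (f j)\<^sup>2 * (g i)\<^sup>2 - 2 * ((f i * g i) * (f j * g j)))"
    by (intro sum.cong refl) (simp add: power2_eq_square algebra_simps)
  also have "\<dots> = (\<Sum>i\<in>A. \<Sum>j\<in>A. (f i)\<^sup>2 * (g j)\<^sup>2) + (\<Sum>i\<in>A. \<Sum>j\<in>A. (f j)\<^sup>2 * (g i)\<^sup>2)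
       - 2 * (\<Sum>i\<in>A. \<Sum>j\<in>A. (f i * g i) * (f j * g j))"
    by (simp only: sum_subtractf sum.distrib sum_distrib_left)
  also have "(\<Sum>i\<in>A. \<Sum>j\<in>A. (f i)\<^sup>2 * (g j)\<^sup>2) = (\<Sum>i\<in>A. (f i)\<^sup>2) * (\<Sum>i\<in>A. (g i)\<^sup>2)"
    by (simp only: sum_product)
  also have "(\<Sum>i\<in>A. \<Sum>j\<in>A. (f j)\<^sup>2 * (g i)\<^sup>2) = (\<Sum>i\<in>A. (f i)\<^sup>2) * (\<Sum>i\<in>A. (g i)\<^sup>2)"
    by (subst sum.swap) (simp only: sum_product)
  also have "(\<Sum>i\<in>A. \<Sum>j\<in>A. (f i * g i) * (f j * g j)) = (\<Sum>i\<in>A. f i * g i)\<^sup>2"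
    by (simp only: sum_product power2_eq_square)
  finally show ?thesis by simp
qed

lemma cs_complex:
  fixes f g :: "'a \<Rightarrow> complex"
  assumes "finite A"
  shows "(cmod (\<Sum>i\<in>A. f i * g i))\<^sup>2 \<le> (\<Sum>i\<in>A. (cmod (f i))\<^sup>2) * (\<Sum>i\<in>A. (cmod (g i))\<^sup>2)"
proof -
  have "cmod (\<Sum>i\<in>A. f i * g i) \<le> (\<Sum>i\<in>A. cmod (f i) * cmod (g i))"
    by (metis (no_types, lifting) norm_mult norm_sum sum.cong)
  then have "(cmod (\<Sum>i\<in>A. f i * g i))\<^sup>2 \<le> (\<Sum>i\<in>A. cmod (f i) * cmod (g i))\<^sup>2"
    by (intro power_mono) auto
  also have "\<dots> \<le> (\<Sum>i\<in>A. (cmod (f i))\<^sup>2) * (\<Sum>i\<in>A. (cmod (g i))\<^sup>2)"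
    by (rule cs_real[OF assms])
  finally show ?thesis .
qed

lemma cmod_sq_sum: "complex_of_real (\<Sum>i\<in>A. (cmod (f i))\<^sup>2) = (\<Sum>i\<in>A. f i * cnj (f i))"
  by (simp only: of_real_sum complex_norm_square)

lemma rank_ineq_plain:
  fixes w X M :: "nat \<Rightarrow> nat \<Rightarrow> complex"
  assumes orth: "\<forall>l<r. \<forall>l'<r. (\<Sum>a<d. w l a * cnj (w l' a)) = (if l = l' then 1 else 0)"
    and rep: "\<forall>a<d. \<forall>b<d. M b a = (\<Sum>l<r. X l a * w l b)"
  shows "(cmod (\<Sum>a<d. M a a))\<^sup>2 \<le> real r * (\<Sum>a<d. \<Sum>b<d. (cmod (M a b))\<^sup>2)"
proof -
  have col: "(\<Sum>b<d. (cmod (M b a))\<^sup>2) = (\<Sum>l<r. (cmod (X l a))\<^sup>2)" if a: "a < d" for a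
  proof -
    have "complex_of_real (\<Sum>b<d. (cmod (M b a))\<^sup>2) = (\<Sum>b<d. M b a * cnj (M b a))"
      by (rule cmod_sq_sum)
    also have "\<dots> = (\<Sum>b<d. (\<Sum>l<r. X l a * w l b) * cnj (\<Sum>l'<r. X l' a * w l' b))"
      using rep a by (intro sum.cong refl) auto
    also have "\<dots> = (\<Sum>b<d. \<Sum>l<r. \<Sum>l'<r. X l a * cnj (X l' a) * (w l b * cnj (w l' b)))"
      apply (simp add: sum_distrib_left sum_distrib_right mult_ac)
      apply (rule sum.cong[OF refl])
      apply (rule sum.swap)
      done
    also have "\<dots> = (\<Sum>l<r. \<Sum>l'<r. X l a * cnj (X l' a) * (\<Sum>b<d. w l b * cnj (w l' b)))"
      by (simp add: sum_distrib_left sum.swap[of _ "{..<d}"])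
    also have "\<dots> = (\<Sum>l<r. \<Sum>l'<r. X l a * cnj (X l' a) * (if l = l' then 1 else 0))"
      using orth by (intro sum.cong refl) auto
    also have "\<dots> = (\<Sum>l<r. X l a * cnj (X l a))"
      by (simp add: if_distrib cong: if_cong)
    also have "\<dots> = complex_of_real (\<Sum>l<r. (cmod (X l a))\<^sup>2)"
      by (rule cmod_sq_sum[symmetric])
    finally show ?thesis using of_real_eq_iff by blast
  qed
  have wn: "(\<Sum>a<d. (cmod (w l a))\<^sup>2) = 1" if l: "l < r" for l
  proof -
    have "complex_of_real (\<Sum>a<d. (cmod (w l a))\<^sup>2) = (\<Sum>a<d. w l a * cnj (w l a))"
      by (rule cmod_sq_sum)
    also have "\<dots> = 1" using orth l by auto
    finally show ?thesis by (metis of_real_1 of_real_eq_iff)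
  qed
  let ?P = "{..<r} \<times> {..<d}"
  have tr: "(\<Sum>a<d. M a a) = (\<Sum>(l,a)\<in>?P. X l a * w l a)"
    using rep by (simp add: sum.cartesian_product[symmetric] sum.swap[of _ "{..<r}"])
  have "(cmod (\<Sum>a<d. M a a))\<^sup>2 \<le> (\<Sum>(l,a)\<in>?P. (cmod (X l a))\<^sup>2) * (\<Sum>(l,a)\<in>?P. (cmod (w l a))\<^sup>2)"
    unfolding tr using cs_complex[of ?P "\<lambda>(l,a). X l a" "\<lambda>(l,a). w l a"]
    by (simp add: case_prod_beta)
  also have "(\<Sum>(l,a)\<in>?P. (cmod (w l a))\<^sup>2) = real r"
    using wn by (simp add: sum.cartesian_product[symmetric])
  also have "(\<Sum>(l,a)\<in>?P. (cmod (X l a))\<^sup>2) = (\<Sum>a<d. \<Sum>b<d. (cmod (M b a))\<^sup>2)"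
    using col by (simp add: sum.cartesian_product[symmetric] sum.swap[of _ "{..<r}"])
  also have "\<dots> = (\<Sum>a<d. \<Sum>b<d. (cmod (M a b))\<^sup>2)" by (rule sum.swap)
  finally show ?thesis by (simp add: mult.commute)
qed



lemma basis_extract:
  fixes M :: "complex mat"
  assumes M: "M \<in> carrier_mat d d"
  shows "\<exists>us. set us \<subseteq> carrier_vec d \<and> corthogonal us \<and> length us \<le> vec_space.rank d M \<and>
           (\<forall>a<d. \<exists>c. col M a = mat_of_cols d us *\<^sub>v vec (length us) c)"
proof -
  interpret cof_vec_space d "TYPE(complex)" .
  let ?P = "\<lambda>T. T \<subseteq> set (cols M) \<and> lin_indpt T"
  have li0: "lin_indpt {}"
    by (metis (no_types) empty_subsetI fin_dim finite_basis_exists subset_li_is_li vec_vs vectorspace.basis_def)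
  obtain S where fS: "finite S" and maxS: "maximal S ?P" and "{} \<subseteq> S"
    using maximal_exists_superset[of "set (cols M)" ?P "{}"] li0 by auto
  have rk: "rank M = card S" by (rule rank_card_indpt[OF M maxS])
  have Scols: "S \<subseteq> set (cols M)" and indS: "lin_indpt S" using maxS unfolding maximal_def by auto
  have colsC: "set (cols M) \<subseteq> carrier_vec d" using M cols_dim by blast
  have SC: "S \<subseteq> carrier_vec d" using Scols colsC by blast
  have inspan: "v \<in> span S" if v: "v \<in> set (cols M)" for v
  proof (rule ccontr)
    assume nv: "v \<notin> span S"
    have vC: "v \<in> carrier_vec d" using v colsC by blast
    have "v \<notin> S" using nv span_mem[OF SC] by blast
    then have "lin_indpt (S \<union> {v})" using lin_dep_iff_in_span[OF SC indS vC] nv by blast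
    moreover have "S \<union> {v} \<subseteq> set (cols M)" using Scols v by blast
    ultimately have "S \<union> {v} = S" using maxS unfolding maximal_def by blast
    then show False using \<open>v \<notin> S\<close> by blast
  qed
  obtain ws where ws: "set ws = S" "distinct ws" using finite_distinct_list[OF fS] by blast
  define us where "us = gram_schmidt d ws"
  have wsC: "set ws \<subseteq> carrier_vec d" using ws SC by simp
  note gs = gram_schmidt_result[OF wsC ws(2) _ us_def]
  have ind': "\<not> lin_dep (set ws)" using indS ws by simp
  have sp: "span (set ws) = span (set us)" and orth: "corthogonal us" and usC: "set us \<subseteq> carrier_vec d"
    and len: "length us = length ws" using gs[OF ind'] by auto
  have lenr: "length us \<le> rank M" using len ws rk distinct_card by fastforce
  have rep: "\<exists>c. col M a = mat_of_cols d us *\<^sub>v vec (length us) c" if a: "a < d" for a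
  proof -
    have "col M a \<in> set (cols M)" using a M by (simp add: cols_def)
    then have "col M a \<in> span (set us)" using inspan sp ws by auto
    then have "col M a \<in> span_list us" using span_list_as_span[OF usC] by simp
    then obtain c where "col M a = lincomb_list c us" by (auto elim: in_span_listE)
    also have "\<dots> = mat_of_cols d us *\<^sub>v vec (length us) c"
      by (rule lincomb_list_as_mat_mult) (use usC in auto)
    finally show ?thesis by blast
  qed
  show ?thesis using usC orth lenr rep by blast
qed



lemma rank_ineq_mat:
  fixes M :: "complex mat"
  assumes M: "M \<in> carrier_mat d d"
  shows "(cmod (\<Sum>a<d. M $$ (a,a)))\<^sup>2 \<le> real (vec_space.rank d M) * (\<Sum>a<d. \<Sum>b<d. (cmod (M $$ (a,b)))\<^sup>2)"
proof -
  obtain us where usC: "set us \<subseteq> carrier_vec d" and orth: "corthogonal us"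
    and len: "length us \<le> vec_space.rank d M"
    and rep: "\<forall>a<d. \<exists>c. col M a = mat_of_cols d us *\<^sub>v vec (length us) c"
    using basis_extract[OF M] by blast
  define L where "L = length us"
  obtain C where C: "\<forall>a<d. col M a = mat_of_cols d us *\<^sub>v vec L (C a)"
    using rep unfolding L_def by metis
  define s where "s l l' = (\<Sum>i<d. (us!l)$i * cnj ((us!l')$i))" for l l'
  have dimu: "dim_vec (us!l) = d" if "l < L" for l using usC that unfolding L_def by (meson carrier_vecD nth_mem subsetD)
  have s_sp: "s l l' = us!l \<bullet>c us!l'" if "l < L" "l' < L" for l l'
    unfolding s_def scalar_prod_def using dimu[OF that(2)] by (simp add: lessThan_atLeast0)
  define N where "N l = (\<Sum>i<d. (cmod ((us!l)$i))\<^sup>2)" for l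
  have sN: "s l l = complex_of_real (N l)" for l unfolding s_def N_def by (simp only: cmod_sq_sum)
  have Npos: "N l > 0" if l: "l < L" for l
  proof -
    have "s l l \<noteq> 0" using s_sp[OF l l] orth l unfolding L_def corthogonal_def by auto
    then have "N l \<noteq> 0" using sN by auto
    moreover have "N l \<ge> 0" unfolding N_def by (simp add: sum_nonneg)
    ultimately show ?thesis by simp
  qed
  have s0: "s l l' = 0" if "l < L" "l' < L" "l \<noteq> l'" for l l'
    using s_sp[OF that(1,2)] orth that unfolding L_def corthogonal_def by auto
  define w where "w l b = (us!l)$b / complex_of_real (sqrt (N l))" for l b
  define X where "X l a = C a l * complex_of_real (sqrt (N l))" for l a
  have worth: "\<forall>l<L. \<forall>l'<L. (\<Sum>a<d. w l a * cnj (w l' a)) = (if l = l' then 1 else 0)"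
  proof (intro allI impI)
    fix l l' assume l: "l < L" and l': "l' < L"
    have "(\<Sum>a<d. w l a * cnj (w l' a)) = s l l' / (complex_of_real (sqrt (N l)) * complex_of_real (sqrt (N l')))"
      unfolding w_def s_def by (simp add: sum_divide_distrib)
    also have "\<dots> = (if l = l' then 1 else 0)"
    proof (cases "l = l'")
      case True
      have "sqrt (N l) * sqrt (N l) = N l" using Npos[OF l] by simp
      then have "complex_of_real (sqrt (N l)) * complex_of_real (sqrt (N l)) = complex_of_real (N l)"
        by (metis of_real_mult)
      then show ?thesis using True sN Npos[OF l] by simp
    next
      case False
      then show ?thesis using s0[OF l l'] by simp
    qed
    finally show "(\<Sum>a<d. w l a * cnj (w l' a)) = (if l = l' then 1 else 0)" .
  qed
  have Mrep: "\<forall>a<d. \<forall>b<d. M $$ (b,a) = (\<Sum>l<L. X l a * w l b)"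
  proof (intro allI impI)
    fix a b assume a: "a < d" and b: "b < d"
    have "M $$ (b,a) = col M a $ b" using M a b by simp
    also have "\<dots> = (mat_of_cols d us *\<^sub>v vec L (C a)) $ b" using C a by simp
    also have "\<dots> = (\<Sum>l<L. (us!l)$b * C a l)"
      using b by (simp add: scalar_prod_def row_def mat_of_cols_index L_def lessThan_atLeast0)
    also have "\<dots> = (\<Sum>l<L. X l a * w l b)"
    proof (intro sum.cong refl)
      fix l assume "l \<in> {..<L}"
      then have "N l > 0" using Npos by blast
      then have ne: "complex_of_real (sqrt (N l)) \<noteq> 0" by simp
      have "X l a * w l b = C a l * (us!l)$b * (complex_of_real (sqrt (N l)) / complex_of_real (sqrt (N l)))"
        unfolding X_def w_def by (simp add: mult_ac)
      also have "\<dots> = (us!l)$b * C a l" using ne by simp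
      finally show "(us!l)$b * C a l = X l a * w l b" by simp
    qed
    finally show "M $$ (b,a) = (\<Sum>l<L. X l a * w l b)" .
  qed
  have "(cmod (\<Sum>a<d. M $$ (a,a)))\<^sup>2 \<le> real L * (\<Sum>a<d. \<Sum>b<d. (cmod (M $$ (a,b)))\<^sup>2)"
  proof -
    have "(cmod (\<Sum>a<d. (\<lambda>b a. M $$ (b,a)) a a))\<^sup>2 \<le> real L * (\<Sum>a<d. \<Sum>b<d. (cmod ((\<lambda>b a. M $$ (b,a)) a b))\<^sup>2)"
      by (rule rank_ineq_plain[OF worth, where X = X]) (use Mrep in simp)
    then show ?thesis by simp
  qed
  also have "\<dots> \<le> real (vec_space.rank d M) * (\<Sum>a<d. \<Sum>b<d. (cmod (M $$ (a,b)))\<^sup>2)"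
  proof (rule mult_right_mono)
    show "real L \<le> real (vec_space.rank d M)" using len unfolding L_def by simp
    show "0 \<le> (\<Sum>a<d. \<Sum>b<d. (cmod (M $$ (a,b)))\<^sup>2)" by (intro sum_nonneg) simp
  qed
  finally show ?thesis .
qed



lemma merge_in:
  assumes "A \<subseteq> S" "x \<in> configs A d" "z \<in> configs (S - A) d"
  shows "merge A x z \<in> configs S d"
  using assms unfolding configs_def merge_def PiE_def extensional_def Pi_def by auto

lemma merge_bij:
  assumes "A \<subseteq> S"
  shows "bij_betw (\<lambda>(x,z). merge A x z) (configs A d \<times> configs (S - A) d) (configs S d)"
proof (rule bij_betw_imageI)
  show "inj_on (\<lambda>(x,z). merge A x z) (configs A d \<times> configs (S - A) d)"
  proof (clarsimp simp: inj_on_def)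
    fix x z x' z'
    assume h: "x \<in> configs A d" "z \<in> configs (S - A) d" "x' \<in> configs A d" "z' \<in> configs (S - A) d"
      "merge A x z = merge A x' z'"
    have e: "\<And>i. (if i \<in> A then x i else z i) = (if i \<in> A then x' i else z' i)"
      using h(5) unfolding merge_def by metis
    have "x = x'"
    proof
      fix i show "x i = x' i"
        using e[of i] h(1,3) unfolding configs_def by (cases "i \<in> A") (auto simp: PiE_def extensional_def)
    qed
    moreover have "z = z'"
    proof
      fix i show "z i = z' i"
        using e[of i] h(2,4) unfolding configs_def by (cases "i \<in> A") (auto simp: PiE_def extensional_def)
    qed
    ultimately show "x = x' \<and> z = z'" by simp
  qed
  show "(\<lambda>(x,z). merge A x z) ` (configs A d \<times> configs (S - A) d) = configs S d"
  proof
    show "(\<lambda>(x,z). merge A x z) ` (configs A d \<times> configs (S - A) d) \<subseteq> configs S d"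
      using merge_in[OF assms] by auto
    show "configs S d \<subseteq> (\<lambda>(x,z). merge A x z) ` (configs A d \<times> configs (S - A) d)"
    proof
      fix X assume X: "X \<in> configs S d"
      have "X = merge A (restrict X A) (restrict X (S - A))"
        using X assms unfolding merge_def configs_def by (auto simp: PiE_def extensional_def)
      moreover have "restrict X A \<in> configs A d" "restrict X (S - A) \<in> configs (S - A) d"
        using X assms unfolding configs_def by auto
      ultimately show "X \<in> (\<lambda>(x,z). merge A x z) ` (configs A d \<times> configs (S - A) d)" by force
    qed
  qed
qed

lemma finite_configs: "finite S \<Longrightarrow> finite (configs S d)"
  unfolding configs_def by (intro finite_PiE) auto

lemma merge_sum:
  assumes "A \<subseteq> S"
  shows "(\<Sum>X\<in>configs S d. f X) = (\<Sum>x\<in>configs A d. \<Sum>z\<in>configs (S - A) d. f (merge A x z))"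
proof -
  have "(\<Sum>X\<in>configs S d. f X) = (\<Sum>(x,z)\<in>configs A d \<times> configs (S - A) d. f (merge A x z))"
    using sum.reindex_bij_betw[OF merge_bij[OF assms], of f] by (simp add: case_prod_beta)
  also have "\<dots> = (\<Sum>x\<in>configs A d. \<Sum>z\<in>configs (S - A) d. f (merge A x z))"
    by (rule sum.cartesian_product[symmetric])
  finally show ?thesis .
qed

lemma configs_single: "configs {i} d = pt i ` {..<d}"
proof
  show "configs {i} d \<subseteq> pt i ` {..<d}"
  proof
    fix x assume x: "x \<in> configs {i} d"
    then have "x = pt i (x i)" unfolding configs_def pt_def by (auto simp: PiE_def extensional_def)
    moreover have "x i < d" using x unfolding configs_def by auto
    ultimately show "x \<in> pt i ` {..<d}" by blast
  qed
  show "pt i ` {..<d} \<subseteq> configs {i} d" unfolding configs_def pt_def by (auto split: if_splits)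
qed

lemma PiE_single: "PiE {i} (\<lambda>_. B) = pt i ` B"
proof
  show "PiE {i} (\<lambda>_. B) \<subseteq> pt i ` B"
  proof
    fix x assume x: "x \<in> PiE {i} (\<lambda>_. B)"
    then have "x = pt i (x i)" unfolding pt_def by (auto simp: PiE_def extensional_def)
    moreover have "x i \<in> B" using x by auto
    ultimately show "x \<in> pt i ` B" by blast
  qed
  show "pt i ` B \<subseteq> PiE {i} (\<lambda>_. B)" unfolding pt_def by (auto split: if_splits)
qed

lemma inj_pt: "inj_on (pt i) B"
  unfolding inj_on_def pt_def by (metis)

lemma pt_at [simp]: "pt i a i = a" unfolding pt_def by simp

lemma prod_indicator:
  assumes "finite A"
  shows "(\<Prod>k\<in>A. (if P k then (1::'a::comm_semiring_1) else 0)) = (if \<forall>k\<in>A. P k then 1 else 0)"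
  using assms by (induction A rule: finite_induct) auto



lemma Lam_complete':
  assumes gm: "gm_basis d lam" and dpos: "d > 0"
    and ab: "a < d" "b < d" "a' < d" "b' < d"
  shows "(\<Sum>m<d\<^sup>2. Lam lam m a b * cnj (Lam lam m a' b')) = (if a = a' \<and> b = b' then of_nat d else 0)"
  using Lam_complete[OF gm dpos ab(3,4,1,2)] by (auto simp: mult.commute)

definition TrL :: "(nat \<Rightarrow> nat \<Rightarrow> nat \<Rightarrow> complex) \<Rightarrow> nat set \<Rightarrow> nat \<Rightarrow>
    ((nat \<Rightarrow> nat) \<Rightarrow> (nat \<Rightarrow> nat) \<Rightarrow> complex) \<Rightarrow> (nat \<Rightarrow> nat) \<Rightarrow> complex" where
  "TrL lam S d rho I = (\<Sum>q\<in>configs S d \<times> configs S d.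
      rho (fst q) (snd q) * (\<Prod>k\<in>S. Lam lam (I k) (snd q k) (fst q k)))"

lemma configs_eq:
  assumes "X \<in> configs S d" "X' \<in> configs S d"
  shows "(\<forall>k\<in>S. X k = X' k) \<longleftrightarrow> X = X'"
proof
  assume h: "\<forall>k\<in>S. X k = X' k"
  show "X = X'"
  proof
    fix k show "X k = X' k"
      using h assms unfolding configs_def by (cases "k \<in> S") (auto simp: PiE_def extensional_def)
  qed
qed auto

lemma prod_complete:
  assumes gm: "gm_basis d lam" and dpos: "d > 0" and fS: "finite S"
    and q: "q \<in> configs S d \<times> configs S d" and q': "q' \<in> configs S d \<times> configs S d"
  shows "(\<Sum>I\<in>PiE S (\<lambda>_. {..<d\<^sup>2}). (\<Prod>k\<in>S. Lam lam (I k) (snd q k) (fst q k)) *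
            cnj (\<Prod>k\<in>S. Lam lam (I k) (snd q' k) (fst q' k)))
        = (if q = q' then of_nat d ^ card S else 0)"
proof -
  have rng: "\<And>X k. X \<in> configs S d \<Longrightarrow> k \<in> S \<Longrightarrow> X k < d" unfolding configs_def by auto
  have "(\<Sum>I\<in>PiE S (\<lambda>_. {..<d\<^sup>2}). (\<Prod>k\<in>S. Lam lam (I k) (snd q k) (fst q k)) *
            cnj (\<Prod>k\<in>S. Lam lam (I k) (snd q' k) (fst q' k)))
      = (\<Sum>I\<in>PiE S (\<lambda>_. {..<d\<^sup>2}). \<Prod>k\<in>S. Lam lam (I k) (snd q k) (fst q k) *
            cnj (Lam lam (I k) (snd q' k) (fst q' k)))"
    by (simp add: prod.distrib)
  also have "\<dots> = (\<Prod>k\<in>S. \<Sum>m<d\<^sup>2. Lam lam m (snd q k) (fst q k) * cnj (Lam lam m (snd q' k) (fst q' k)))"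
    by (rule prod_sum_PiE[symmetric]) (use fS in auto)
  also have "\<dots> = (\<Prod>k\<in>S. if snd q k = snd q' k \<and> fst q k = fst q' k then of_nat d else 0)"
    using q q' rng by (intro prod.cong refl Lam_complete'[OF gm dpos]) (auto simp: mem_Times_iff)
  also have "\<dots> = (if \<forall>k\<in>S. snd q k = snd q' k \<and> fst q k = fst q' k then of_nat d ^ card S else 0)"
    using fS by (induction S rule: finite_induct) auto
  also have "(\<forall>k\<in>S. snd q k = snd q' k \<and> fst q k = fst q' k) \<longleftrightarrow> q = q'"
    using configs_eq[of "fst q" S d "fst q'"] configs_eq[of "snd q" S d "snd q'"] q q'
    by (auto simp: mem_Times_iff prod_eq_iff)
  finally show ?thesis .
qed

lemma bloch:
  assumes gm: "gm_basis d lam" and dpos: "d > 0" and fS: "finite S"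
  shows "(\<Sum>I\<in>PiE S (\<lambda>_. {..<d\<^sup>2}). (cmod (TrL lam S d rho I))\<^sup>2)
      = real d ^ card S * (\<Sum>q\<in>configs S d \<times> configs S d. (cmod (rho (fst q) (snd q)))\<^sup>2)"
proof -
  let ?Q = "configs S d \<times> configs S d"
  let ?J = "PiE S (\<lambda>_. {..<d\<^sup>2})"
  let ?P = "\<lambda>I q. \<Prod>k\<in>S. Lam lam (I k) (snd q k) (fst q k)"
  have fQ: "finite ?Q" using finite_configs[OF fS] by simp
  have "complex_of_real (\<Sum>I\<in>?J. (cmod (TrL lam S d rho I))\<^sup>2) = (\<Sum>I\<in>?J. TrL lam S d rho I * cnj (TrL lam S d rho I))"
    by (rule cmod_sq_sum)
  also have "\<dots> = (\<Sum>I\<in>?J. \<Sum>q\<in>?Q. \<Sum>q'\<in>?Q. rho (fst q) (snd q) * cnj (rho (fst q') (snd q')) * (?P I q * cnj (?P I q')))"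
    unfolding TrL_def by (simp add: sum_product cnj_sum mult_ac)
  also have "\<dots> = (\<Sum>q\<in>?Q. \<Sum>q'\<in>?Q. rho (fst q) (snd q) * cnj (rho (fst q') (snd q')) * (\<Sum>I\<in>?J. ?P I q * cnj (?P I q')))"
    by (simp add: sum_distrib_left sum.swap[of _ ?J])
  also have "\<dots> = (\<Sum>q\<in>?Q. \<Sum>q'\<in>?Q. rho (fst q) (snd q) * cnj (rho (fst q') (snd q')) * (if q = q' then of_nat d ^ card S else 0))"
    by (intro sum.cong refl, subst prod_complete[OF gm dpos fS]) auto
  also have "\<dots> = (\<Sum>q\<in>?Q. rho (fst q) (snd q) * cnj (rho (fst q) (snd q)) * of_nat d ^ card S)"
    using fQ by (simp add: if_distrib cong: if_cong)
  also have "\<dots> = of_nat d ^ card S * (\<Sum>q\<in>?Q. rho (fst q) (snd q) * cnj (rho (fst q) (snd q)))"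
    by (simp add: sum_distrib_left mult_ac)
  also have "\<dots> = complex_of_real (real d ^ card S * (\<Sum>q\<in>?Q. (cmod (rho (fst q) (snd q)))\<^sup>2))"
    by (simp only: of_real_mult of_real_power of_real_of_nat_eq cmod_sq_sum)
  finally show ?thesis using of_real_eq_iff by blast
qed



definition extI :: "nat set \<Rightarrow> nat set \<Rightarrow> (nat \<Rightarrow> nat) \<Rightarrow> nat \<Rightarrow> nat" where
  "extI S A I = (\<lambda>k. if k \<in> A then I k else if k \<in> S then 0 else undefined)"

lemma prod_factor:
  assumes AS: "A \<subseteq> S" and fS: "finite S" and I0: "\<forall>k\<in>A. I k \<noteq> 0"
    and x: "x \<in> configs A d" and y: "y \<in> configs A d"
    and z: "z \<in> configs (S - A) d" and w: "w \<in> configs (S - A) d"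
  shows "(\<Prod>k\<in>S. Lam lam (extI S A I k) (merge A y w k) (merge A x z k))
       = (\<Prod>k\<in>A. lam (I k) (y k) (x k)) * (if w = z then 1 else 0)"
proof -
  have "(\<Prod>k\<in>S. Lam lam (extI S A I k) (merge A y w k) (merge A x z k))
      = (\<Prod>k\<in>S - A. Lam lam (extI S A I k) (merge A y w k) (merge A x z k)) *
        (\<Prod>k\<in>A. Lam lam (extI S A I k) (merge A y w k) (merge A x z k))"
    by (rule prod.subset_diff[OF AS fS])
  also have "(\<Prod>k\<in>A. Lam lam (extI S A I k) (merge A y w k) (merge A x z k)) = (\<Prod>k\<in>A. lam (I k) (y k) (x k))"
    using I0 by (intro prod.cong refl) (auto simp: Lam_def extI_def merge_def)
  also have "(\<Prod>k\<in>S - A. Lam lam (extI S A I k) (merge A y w k) (merge A x z k))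
      = (\<Prod>k\<in>S - A. if w k = z k then 1 else 0)"
    by (intro prod.cong refl) (auto simp: Lam_def extI_def merge_def)
  also have "\<dots> = (if \<forall>k\<in>S - A. w k = z k then 1 else 0)"
    by (rule prod_indicator) (use fS in simp)
  also have "(\<forall>k\<in>S - A. w k = z k) \<longleftrightarrow> w = z" by (rule configs_eq[OF w z])
  finally show ?thesis by (simp add: mult.commute)
qed

lemma corr_TrL:
  assumes AS: "A \<subseteq> {1..n}" and I0: "\<forall>k\<in>A. I k \<noteq> 0"
  shows "corr n d lam rho A I = TrL lam {1..n} d rho (extI {1..n} A I)"
proof -
  let ?S = "{1..n}"
  let ?cA = "configs A d" and ?cB = "configs (?S - A) d" and ?C = "configs ?S d"
  let ?L = "\<lambda>x y. \<Prod>k\<in>A. lam (I k) (y k) (x k)"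
  have fB: "finite ?cB" by (rule finite_configs) simp
  have "TrL lam ?S d rho (extI ?S A I) = (\<Sum>X\<in>?C. \<Sum>Y\<in>?C. rho X Y * (\<Prod>k\<in>?S. Lam lam (extI ?S A I k) (Y k) (X k)))"
    unfolding TrL_def by (simp add: sum.cartesian_product case_prod_beta)
  also have "\<dots> = (\<Sum>x\<in>?cA. \<Sum>z\<in>?cB. \<Sum>y\<in>?cA. \<Sum>w\<in>?cB.
        rho (merge A x z) (merge A y w) * (\<Prod>k\<in>?S. Lam lam (extI ?S A I k) (merge A y w k) (merge A x z k)))"
    by (simp only: merge_sum[OF AS])
  also have "\<dots> = (\<Sum>x\<in>?cA. \<Sum>z\<in>?cB. \<Sum>y\<in>?cA. \<Sum>w\<in>?cB.
        rho (merge A x z) (merge A y w) * (?L x y * (if w = z then 1 else 0)))"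
    by (intro sum.cong refl, subst prod_factor[OF AS _ I0]) auto
  also have "\<dots> = (\<Sum>x\<in>?cA. \<Sum>z\<in>?cB. \<Sum>y\<in>?cA. rho (merge A x z) (merge A y z) * ?L x y)"
  proof (intro sum.cong refl)
    fix x z y assume z: "z \<in> ?cB"
    have "(\<Sum>w\<in>?cB. rho (merge A x z) (merge A y w) * (?L x y * (if w = z then 1 else 0)))
        = (\<Sum>w\<in>?cB. if w = z then rho (merge A x z) (merge A y w) * ?L x y else 0)"
      by (intro sum.cong refl) auto
    also have "\<dots> = rho (merge A x z) (merge A y z) * ?L x y"
      using z fB by (simp add: sum.delta')
    finally show "(\<Sum>w\<in>?cB. rho (merge A x z) (merge A y w) * (?L x y * (if w = z then 1 else 0)))
        = rho (merge A x z) (merge A y z) * ?L x y" .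
  qed
  also have "\<dots> = (\<Sum>x\<in>?cA. \<Sum>y\<in>?cA. \<Sum>z\<in>?cB. rho (merge A x z) (merge A y z) * ?L x y)"
    by (rule sum.cong[OF refl], rule sum.swap)
  also have "\<dots> = corr n d lam rho A I"
    unfolding corr_def reduced_def by (simp add: sum_distrib_right)
  finally show ?thesis by simp
qed



lemma all_alpha_bound:
  assumes gm: "gm_basis d lam" and d2: "d \<ge> 2"
  shows "(\<Sum>A\<in>Pow {1..n}. \<Sum>I\<in>PiE A (\<lambda>_. {1..d\<^sup>2 - 1}). (cmod (corr n d lam rho A I))\<^sup>2)
     \<le> real d ^ n * (\<Sum>q\<in>configs {1..n} d \<times> configs {1..n} d. (cmod (rho (fst q) (snd q)))\<^sup>2)"
proof -
  let ?S = "{1..n}"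
  let ?Sig = "Sigma (Pow ?S) (\<lambda>A. PiE A (\<lambda>_. {1..d\<^sup>2 - 1}))"
  let ?g = "\<lambda>p. extI ?S (fst p) (snd p)"
  let ?f = "\<lambda>I. (cmod (TrL lam ?S d rho I))\<^sup>2"
  have dpos: "d > 0" using d2 by simp
  have Ik: "I k \<noteq> 0 \<and> I k < d\<^sup>2" if "I \<in> PiE A (\<lambda>_. {1..d\<^sup>2 - 1})" "k \<in> A" for A I k
  proof -
    have "I k \<in> {1..d\<^sup>2 - 1}" using that by (simp add: PiE_iff)
    moreover have "d\<^sup>2 > 0" using dpos by simp
    ultimately show ?thesis by auto
  qed
  have fin: "finite ?Sig" by (intro finite_SigmaI finite_PiE) (auto intro: finite_subset)
  have "(\<Sum>A\<in>Pow ?S. \<Sum>I\<in>PiE A (\<lambda>_. {1..d\<^sup>2 - 1}). (cmod (corr n d lam rho A I))\<^sup>2)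
      = (\<Sum>A\<in>Pow ?S. \<Sum>I\<in>PiE A (\<lambda>_. {1..d\<^sup>2 - 1}). ?f (extI ?S A I))"
  proof (intro sum.cong refl)
    fix A I assume A: "A \<in> Pow ?S" and I: "I \<in> PiE A (\<lambda>_. {1..d\<^sup>2 - 1})"
    have "\<forall>k\<in>A. I k \<noteq> 0"
    proof
      fix k assume "k \<in> A"
      then have "I k \<in> {1..d\<^sup>2 - 1}" using I by (simp add: PiE_iff)
      then show "I k \<noteq> 0" by simp
    qed
    then show "(cmod (corr n d lam rho A I))\<^sup>2 = ?f (extI ?S A I)"
      using corr_TrL[of A n I d lam rho] A by simp
  qed
  also have "\<dots> = (\<Sum>p\<in>?Sig. ?f (?g p))"
  proof -
    have "\<forall>A\<in>Pow ?S. finite (PiE A (\<lambda>_. {1..d\<^sup>2 - 1}))"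
      by (auto intro!: finite_PiE intro: finite_subset)
    then show ?thesis
      using sum.Sigma[of "Pow ?S" "\<lambda>A. PiE A (\<lambda>_. {1..d\<^sup>2 - 1})" "\<lambda>A I. ?f (extI ?S A I)"]
      by (simp add: case_prod_beta)
  qed
  also have "\<dots> = (\<Sum>I'\<in>?g ` ?Sig. ?f I')"
  proof -
    have inj: "inj_on ?g ?Sig"
    proof (rule inj_onI)
      fix p p' assume p: "p \<in> ?Sig" and p': "p' \<in> ?Sig" and e: "?g p = ?g p'"
      obtain A I where pA: "p = (A, I)" by (cases p)
      obtain A' I' where pA': "p' = (A', I')" by (cases p')
      have AS: "A \<subseteq> ?S" and I: "I \<in> PiE A (\<lambda>_. {1..d\<^sup>2 - 1})" using p pA by auto
      have AS': "A' \<subseteq> ?S" and I': "I' \<in> PiE A' (\<lambda>_. {1..d\<^sup>2 - 1})" using p' pA' by auto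
      have e': "\<And>k. extI ?S A I k = extI ?S A' I' k" using e pA pA' by simp
      have supp: "A = {k\<in>?S. extI ?S A I k \<noteq> 0}" using AS I Ik[OF I] by (auto simp: extI_def)
      have supp': "A' = {k\<in>?S. extI ?S A' I' k \<noteq> 0}" using AS' I' Ik[OF I'] by (auto simp: extI_def)
      have AA: "A = A'" using supp supp' e' by simp
      have "I = I'"
      proof
        fix k show "I k = I' k"
        proof (cases "k \<in> A")
          case True then show ?thesis using e'[of k] AA by (simp add: extI_def)
        next
          case False then show ?thesis using I I' AA by (auto simp: PiE_def extensional_def)
        qed
      qed
      then show "p = p'" using pA pA' AA by simp
    qed
    show ?thesis using sum.reindex[OF inj, of ?f] by (simp add: o_def)
  qed
  also have "\<dots> \<le> (\<Sum>I'\<in>PiE ?S (\<lambda>_. {..<d\<^sup>2}). ?f I')"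
  proof (rule sum_mono2)
    show "finite (PiE ?S (\<lambda>_. {..<d\<^sup>2}))" by (intro finite_PiE) auto
    show "?g ` ?Sig \<subseteq> PiE ?S (\<lambda>_. {..<d\<^sup>2})"
    proof
      fix J assume "J \<in> ?g ` ?Sig"
      then obtain A I where AS: "A \<subseteq> ?S" and I: "I \<in> PiE A (\<lambda>_. {1..d\<^sup>2 - 1})"
        and J: "J = extI ?S A I" by auto
      have "d\<^sup>2 > 0" using dpos by simp
      then show "J \<in> PiE ?S (\<lambda>_. {..<d\<^sup>2})" unfolding J
        using AS I Ik[OF I] unfolding extI_def by (auto simp: PiE_def extensional_def Pi_def)
    qed
  qed auto
  also have "\<dots> = real d ^ n * (\<Sum>q\<in>configs ?S d \<times> configs ?S d. (cmod (rho (fst q) (snd q)))\<^sup>2)"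
    using bloch[OF gm dpos, of ?S rho] by simp
  finally show ?thesis .
qed



lemma sum_configs_single: "(\<Sum>x\<in>configs {i} d. f x) = (\<Sum>a<d. f (pt i a))"
  unfolding configs_single by (simp add: sum.reindex[OF inj_pt] o_def)

lemma sum_PiE_single: "(\<Sum>I\<in>PiE {i} (\<lambda>_. B). f I) = (\<Sum>m\<in>B. f (pt i m))"
  unfolding PiE_single by (simp add: sum.reindex[OF inj_pt] o_def)

lemma Re_sq_le: "(Re z)\<^sup>2 \<le> (cmod z)\<^sup>2"
  using abs_Re_le_cmod[of z] by (metis abs_ge_zero power2_abs power_mono)

lemma single_site:
  fixes psi :: "(nat \<Rightarrow> nat) \<Rightarrow> complex"
  assumes gm: "gm_basis d lam" and d2: "d \<ge> 2" and i: "i \<in> {1..n}"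
    and nrm: "(\<Sum>x\<in>configs {1..n} d. (cmod (psi x))\<^sup>2) = 1"
    and rk: "vec_space.rank d (single_red n d (proj psi) i) \<le> k" and k1: "k \<ge> 1"
  shows "tau_sq n d lam (proj psi) {i} \<ge> real d / real k - 1"
proof -
  let ?S = "{1..n}"
  let ?rho = "proj psi"
  let ?r = "reduced n d ?rho {i}"
  let ?C = "configs {i} d"
  let ?Q = "?C \<times> ?C"
  let ?T = "TrL lam {i} d ?r"
  have dpos: "d > 0" using d2 by simp
  have fC: "finite ?C" by (rule finite_configs) simp
  have iS: "{i} \<subseteq> ?S" using i by simp
  have corrT: "corr n d lam ?rho {i} (pt i m) = ?T (pt i m)" if m: "m \<in> {1..d\<^sup>2 - 1}" for m
  proof -
    have "corr n d lam ?rho {i} (pt i m) = (\<Sum>x\<in>?C. \<Sum>y\<in>?C. ?r x y * lam m (y i) (x i))"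
      unfolding corr_def by simp
    also have "\<dots> = ?T (pt i m)"
      unfolding TrL_def using m by (simp add: sum.cartesian_product case_prod_beta Lam_def)
    finally show ?thesis .
  qed
  have herm: "cnj (?r x y) = ?r y x" for x y
    unfolding reduced_def proj_def by (simp add: mult.commute)
  have hl: "cnj (lam m a b) = lam m b a" if "m \<in> {1..d\<^sup>2 - 1}" "a < d" "b < d" for m a b
    using gm that unfolding gm_basis_def by (metis complex_cnj_cnj)
  have rng: "\<And>x. x \<in> ?C \<Longrightarrow> x i < d" unfolding configs_def by auto
  have real: "Im (?T (pt i m)) = 0" if m: "m \<in> {1..d\<^sup>2 - 1}" for m
  proof -
    have T: "?T (pt i m) = (\<Sum>x\<in>?C. \<Sum>y\<in>?C. ?r x y * lam m (y i) (x i))"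
      unfolding TrL_def using m by (simp add: sum.cartesian_product case_prod_beta Lam_def)
    have "cnj (?T (pt i m)) = (\<Sum>x\<in>?C. \<Sum>y\<in>?C. ?r y x * lam m (x i) (y i))"
      unfolding T cnj_sum using herm hl[OF m] rng by (intro sum.cong refl) (simp)
    also have "\<dots> = ?T (pt i m)" unfolding T by (rule sum.swap)
    finally have "Im (cnj (?T (pt i m))) = Im (?T (pt i m))" by simp
    then show ?thesis by simp
  qed
  have trace: "(\<Sum>x\<in>?C. ?r x x) = 1"
  proof -
    have "(\<Sum>x\<in>?C. ?r x x) = (\<Sum>x\<in>?C. \<Sum>z\<in>configs (?S - {i}) d. psi (merge {i} x z) * cnj (psi (merge {i} x z)))"
      unfolding reduced_def proj_def by simp
    also have "\<dots> = (\<Sum>X\<in>configs ?S d. psi X * cnj (psi X))"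
      by (rule merge_sum[OF iS, symmetric])
    also have "\<dots> = complex_of_real (\<Sum>X\<in>configs ?S d. (cmod (psi X))\<^sup>2)"
      by (rule cmod_sq_sum[symmetric])
    also have "\<dots> = 1" using nrm by (simp only: of_real_1)
    finally show ?thesis .
  qed
  have T0: "?T (pt i 0) = 1"
  proof -
    have "?T (pt i 0) = (\<Sum>x\<in>?C. \<Sum>y\<in>?C. ?r x y * (if y i = x i then 1 else 0))"
      unfolding TrL_def by (simp add: sum.cartesian_product case_prod_beta Lam_def)
    also have "\<dots> = (\<Sum>x\<in>?C. \<Sum>y\<in>?C. if y = x then ?r x y else 0)"
      using configs_eq[of _ "{i}" d] by (intro sum.cong refl) auto
    also have "\<dots> = (\<Sum>x\<in>?C. ?r x x)" using fC by (simp add: sum.delta)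
    finally show ?thesis using trace by simp
  qed
  have bl: "(\<Sum>m<d\<^sup>2. (cmod (?T (pt i m)))\<^sup>2) = real d * (\<Sum>q\<in>?Q. (cmod (?r (fst q) (snd q)))\<^sup>2)"
    using bloch[OF gm dpos, of "{i}" ?r] by (simp add: sum_PiE_single)
  have split: "(\<Sum>m<d\<^sup>2. (cmod (?T (pt i m)))\<^sup>2) = (cmod (?T (pt i 0)))\<^sup>2 + (\<Sum>m\<in>{1..d\<^sup>2 - 1}. (cmod (?T (pt i m)))\<^sup>2)"
  proof -
    have "{..<d\<^sup>2} = insert 0 {1..d\<^sup>2 - 1}" using dpos by auto
    then show ?thesis by simp
  qed
  have tau: "tau_sq n d lam ?rho {i} = (\<Sum>m\<in>{1..d\<^sup>2 - 1}. (cmod (?T (pt i m)))\<^sup>2)"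
  proof -
    have "tau_sq n d lam ?rho {i} = (\<Sum>m\<in>{1..d\<^sup>2 - 1}. (Re (corr n d lam ?rho {i} (pt i m)))\<^sup>2)"
      unfolding tau_sq_def by (simp add: sum_PiE_single)
    also have "\<dots> = (\<Sum>m\<in>{1..d\<^sup>2 - 1}. (cmod (?T (pt i m)))\<^sup>2)"
    proof (intro sum.cong refl)
      fix m assume m: "m \<in> {1..d\<^sup>2 - 1}"
      show "(Re (corr n d lam ?rho {i} (pt i m)))\<^sup>2 = (cmod (?T (pt i m)))\<^sup>2"
        using corrT[OF m] real[OF m] by (simp add: cmod_power2)
    qed
    finally show ?thesis .
  qed
  define M where "M = single_red n d ?rho i"
  have M: "M \<in> carrier_mat d d" unfolding M_def single_red_def by simp
  have Mab: "M $$ (a,b) = ?r (pt i a) (pt i b)" if "a < d" "b < d" for a b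
    using that unfolding M_def single_red_def by simp
  have trM: "(\<Sum>a<d. M $$ (a,a)) = 1"
    using trace Mab by (simp add: sum_configs_single)
  have sqM: "(\<Sum>a<d. \<Sum>b<d. (cmod (M $$ (a,b)))\<^sup>2) = (\<Sum>q\<in>?Q. (cmod (?r (fst q) (snd q)))\<^sup>2)"
  proof -
    have "(\<Sum>q\<in>?Q. (cmod (?r (fst q) (snd q)))\<^sup>2) = (\<Sum>x\<in>?C. \<Sum>y\<in>?C. (cmod (?r x y))\<^sup>2)"
      by (simp add: sum.cartesian_product case_prod_beta)
    also have "\<dots> = (\<Sum>a<d. \<Sum>b<d. (cmod (?r (pt i a) (pt i b)))\<^sup>2)"
      by (simp add: sum_configs_single)
    also have "\<dots> = (\<Sum>a<d. \<Sum>b<d. (cmod (M $$ (a,b)))\<^sup>2)"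
      using Mab by simp
    finally show ?thesis by simp
  qed
  have "1 \<le> real (vec_space.rank d M) * (\<Sum>q\<in>?Q. (cmod (?r (fst q) (snd q)))\<^sup>2)"
    using rank_ineq_mat[OF M] trM sqM by simp
  also have "\<dots> \<le> real k * (\<Sum>q\<in>?Q. (cmod (?r (fst q) (snd q)))\<^sup>2)"
    using rk unfolding M_def by (intro mult_right_mono) (auto intro: sum_nonneg)
  finally have one: "1 \<le> real k * (\<Sum>q\<in>?Q. (cmod (?r (fst q) (snd q)))\<^sup>2)" .
  have kpos: "real k > 0" using k1 by simp
  have "real d / real k \<le> real d * (\<Sum>q\<in>?Q. (cmod (?r (fst q) (snd q)))\<^sup>2)"
    using one kpos dpos by (simp add: divide_le_eq mult.commute mult.left_commute)
  then show ?thesis using tau bl split T0 by simp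
qed



lemma pure_sq_sum:
  assumes fC: "finite C" and nrm: "(\<Sum>x\<in>C. (cmod (psi x))\<^sup>2) = 1"
  shows "(\<Sum>q\<in>C \<times> C. (cmod (proj psi (fst q) (snd q)))\<^sup>2) = 1"
proof -
  have "(\<Sum>q\<in>C \<times> C. (cmod (proj psi (fst q) (snd q)))\<^sup>2) = (\<Sum>x\<in>C. \<Sum>y\<in>C. (cmod (psi x))\<^sup>2 * (cmod (psi y))\<^sup>2)"
    by (simp add: sum.cartesian_product case_prod_beta proj_def norm_mult power_mult_distrib)
  also have "\<dots> = (\<Sum>x\<in>C. (cmod (psi x))\<^sup>2) * (\<Sum>y\<in>C. (cmod (psi y))\<^sup>2)"
    by (simp add: sum_product)
  finally show ?thesis using nrm by simp
qed

lemma Q_empty: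
  assumes nrm: "(\<Sum>x\<in>configs {1..n} d. (cmod (psi x))\<^sup>2) = 1"
  shows "(\<Sum>I\<in>PiE {} (\<lambda>_. {1..d\<^sup>2 - 1}). (cmod (corr n d lam (proj psi) {} I))\<^sup>2) = 1"
proof -
  have mz: "merge {} x z = z" for x z unfolding merge_def by simp
  have c0: "configs {} d = {\<lambda>_. undefined}" unfolding configs_def by simp
  have "corr n d lam (proj psi) {} (\<lambda>_. undefined) = (\<Sum>z\<in>configs {1..n} d. psi z * cnj (psi z))"
    unfolding corr_def reduced_def c0 by (simp add: mz proj_def)
  also have "\<dots> = complex_of_real (\<Sum>z\<in>configs {1..n} d. (cmod (psi z))\<^sup>2)"
    by (rule cmod_sq_sum[symmetric])
  also have "\<dots> = 1" using nrm by simp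
  finally show ?thesis by simp
qed

lemma small_subsets:
  "Pow {1..n} - {A. A \<subseteq> {1..n} \<and> card A \<ge> 2} = insert {} ((\<lambda>i. {i}) ` {1..(n::nat)})"
proof
  show "Pow {1..n} - {A. A \<subseteq> {1..n} \<and> card A \<ge> 2} \<subseteq> insert {} ((\<lambda>i. {i}) ` {1..n})"
  proof
    fix A assume A: "A \<in> Pow {1..n} - {A. A \<subseteq> {1..n} \<and> card A \<ge> 2}"
    then have AS: "A \<subseteq> {1..n}" and c: "card A < 2" by auto
    have fA: "finite A" using AS finite_subset by blast
    show "A \<in> insert {} ((\<lambda>i. {i}) ` {1..n})"
    proof (cases "card A = 0")
      case True then show ?thesis using fA by simp
    next
      case False
      then have "card A = 1" using c by simp
      then obtain x where "A = {x}" by (rule card_1_singletonE)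
      then show ?thesis using AS by auto
    qed
  qed
  show "insert {} ((\<lambda>i. {i}) ` {1..n}) \<subseteq> Pow {1..n} - {A. A \<subseteq> {1..n} \<and> card A \<ge> 2}"
    by auto
qed

lemma pure_bound:
  fixes psi :: "(nat \<Rightarrow> nat) \<Rightarrow> complex"
  assumes gm: "gm_basis d lam" and d2: "d \<ge> 2"
    and k: "\<forall>i\<in>{1..n}. k i \<in> {1..d}"
    and nrm: "(\<Sum>x\<in>configs {1..n} d. (cmod (psi x))\<^sup>2) = 1"
    and rk: "\<forall>i\<in>{1..n}. vec_space.rank d (single_red n d (proj psi) i) \<le> k i"
  shows "C2 n d lam (proj psi) \<le> real d ^ n + real n - 1 - (\<Sum>i=1..n. real d / real (k i))"
proof -
  let ?S = "{1..n}"
  let ?rho = "proj psi"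
  define Q where "Q A = (\<Sum>I\<in>PiE A (\<lambda>_. {1..d\<^sup>2 - 1}). (cmod (corr n d lam ?rho A I))\<^sup>2)" for A
  let ?B2 = "{A. A \<subseteq> ?S \<and> card A \<ge> 2}"
  have fP: "finite (Pow ?S)" by simp
  have B2P: "?B2 \<subseteq> Pow ?S" by auto
  have tauQ: "tau_sq n d lam ?rho A \<le> Q A" for A
    unfolding tau_sq_def Q_def by (intro sum_mono Re_sq_le)
  have C2Q: "C2 n d lam ?rho \<le> (\<Sum>A\<in>?B2. Q A)"
    unfolding C2_def by (intro sum_mono tauQ)
  have "(\<Sum>A\<in>Pow ?S. Q A) = (\<Sum>A\<in>Pow ?S - ?B2. Q A) + (\<Sum>A\<in>?B2. Q A)"
    by (rule sum.subset_diff[OF B2P fP])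
  also have "(\<Sum>A\<in>Pow ?S - ?B2. Q A) = Q {} + (\<Sum>i\<in>?S. Q {i})"
  proof -
    have "(\<Sum>A\<in>Pow ?S - ?B2. Q A) = (\<Sum>A\<in>insert {} ((\<lambda>i. {i}) ` ?S). Q A)"
      by (simp only: small_subsets)
    also have "\<dots> = Q {} + (\<Sum>A\<in>(\<lambda>i. {i}) ` ?S. Q A)"
      by (rule sum.insert) auto
    also have "(\<Sum>A\<in>(\<lambda>i. {i}) ` ?S. Q A) = (\<Sum>i\<in>?S. Q {i})"
      by (subst sum.reindex) (auto simp: inj_on_def)
    finally show ?thesis .
  qed
  finally have split: "(\<Sum>A\<in>Pow ?S. Q A) = Q {} + (\<Sum>i\<in>?S. Q {i}) + (\<Sum>A\<in>?B2. Q A)" .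
  have allb: "(\<Sum>A\<in>Pow ?S. Q A) \<le> real d ^ n"
    using all_alpha_bound[OF gm d2, of n ?rho] pure_sq_sum[OF finite_configs nrm]
    unfolding Q_def by simp
  have Q0: "Q {} = 1" unfolding Q_def by (rule Q_empty[OF nrm])
  have Qi: "Q {i} \<ge> real d / real (k i) - 1" if i: "i \<in> ?S" for i
  proof -
    have "k i \<ge> 1" using k i by auto
    then have "tau_sq n d lam ?rho {i} \<ge> real d / real (k i) - 1"
      using single_site[OF gm d2 i nrm] rk i by blast
    then show ?thesis using tauQ[of "{i}"] by linarith
  qed
  have "(\<Sum>i\<in>?S. real d / real (k i) - 1) \<le> (\<Sum>i\<in>?S. Q {i})"
    by (intro sum_mono Qi)
  moreover have "(\<Sum>i\<in>?S. real d / real (k i) - 1) = (\<Sum>i=1..n. real d / real (k i)) - real n"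
    by (simp add: sum_subtractf)
  ultimately show ?thesis using C2Q split allb Q0 by linarith
qed

lemma jensen_sq:
  fixes p r :: "'j \<Rightarrow> real"
  assumes "finite J" "\<forall>j\<in>J. p j \<ge> 0" "(\<Sum>j\<in>J. p j) = 1"
  shows "(\<Sum>j\<in>J. p j * r j)\<^sup>2 \<le> (\<Sum>j\<in>J. p j * (r j)\<^sup>2)"
proof -
  define m where "m = (\<Sum>j\<in>J. p j * r j)"
  have "0 \<le> (\<Sum>j\<in>J. p j * (r j - m)\<^sup>2)" using assms(2) by (intro sum_nonneg) auto
  also have "\<dots> = (\<Sum>j\<in>J. p j * (r j)\<^sup>2) - 2 * m * (\<Sum>j\<in>J. p j * r j) + m\<^sup>2 * (\<Sum>j\<in>J. p j)"
    by (simp add: power2_diff algebra_simps sum.distrib sum_subtractf sum_distrib_left sum_distrib_right)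
  finally show ?thesis using assms(3) unfolding m_def by (simp add: power2_eq_square)
qed



lemma corr_mix:
  fixes J :: "'j set" and p :: "'j \<Rightarrow> real"
  assumes AS: "A \<subseteq> {1..n}"
    and rho: "\<forall>x\<in>configs {1..n} d. \<forall>y\<in>configs {1..n} d.
           rho x y = (\<Sum>j\<in>J. complex_of_real (p j) * proj (psi j) x y)"
  shows "corr n d lam rho A I = (\<Sum>j\<in>J. complex_of_real (p j) * corr n d lam (proj (psi j)) A I)"
proof -
  let ?cA = "configs A d" and ?cB = "configs ({1..n} - A) d"
  let ?L = "\<lambda>x y. \<Prod>k\<in>A. lam (I k) (y k) (x k)"
  have red: "reduced n d rho A x y = (\<Sum>j\<in>J. complex_of_real (p j) * reduced n d (proj (psi j)) A x y)"
    if x: "x \<in> ?cA" and y: "y \<in> ?cA" for x y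
  proof -
    have "reduced n d rho A x y = (\<Sum>z\<in>?cB. \<Sum>j\<in>J. complex_of_real (p j) * proj (psi j) (merge A x z) (merge A y z))"
      unfolding reduced_def using rho merge_in[OF AS x] merge_in[OF AS y] by (intro sum.cong refl) auto
    also have "\<dots> = (\<Sum>j\<in>J. complex_of_real (p j) * reduced n d (proj (psi j)) A x y)"
      unfolding reduced_def sum_distrib_left by (rule sum.swap)
    finally show ?thesis .
  qed
  have "corr n d lam rho A I = (\<Sum>x\<in>?cA. \<Sum>y\<in>?cA. (\<Sum>j\<in>J. complex_of_real (p j) * reduced n d (proj (psi j)) A x y) * ?L x y)"
    unfolding corr_def using red by (intro sum.cong refl) auto
  also have "\<dots> = (\<Sum>x\<in>?cA. \<Sum>y\<in>?cA. \<Sum>j\<in>J. complex_of_real (p j) * (reduced n d (proj (psi j)) A x y * ?L x y))"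
    by (simp add: sum_distrib_right mult.assoc)
  also have "\<dots> = (\<Sum>j\<in>J. \<Sum>x\<in>?cA. \<Sum>y\<in>?cA. complex_of_real (p j) * (reduced n d (proj (psi j)) A x y * ?L x y))"
    by (simp add: sum.swap[of _ J])
  also have "\<dots> = (\<Sum>j\<in>J. complex_of_real (p j) * corr n d lam (proj (psi j)) A I)"
    unfolding corr_def by (simp add: sum_distrib_left)
  finally show ?thesis .
qed

theorem theorem3:
  fixes n d :: nat and k :: "nat \<Rightarrow> nat"
    and lam :: "nat \<Rightarrow> nat \<Rightarrow> nat \<Rightarrow> complex"
    and rho :: "(nat \<Rightarrow> nat) \<Rightarrow> (nat \<Rightarrow> nat) \<Rightarrow> complex"
    and J :: "'j set" and p :: "'j \<Rightarrow> real" and psi :: "'j \<Rightarrow> (nat \<Rightarrow> nat) \<Rightarrow> complex"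
  assumes "n \<ge> 1" and "d \<ge> 2"
    and "\<forall>i\<in>{1..n}. k i \<in> {1..d}"
    and "gm_basis d lam"
    and "finite J"
    and "\<forall>j\<in>J. p j \<ge> 0" and "(\<Sum>j\<in>J. p j) = 1"
    and "\<forall>j\<in>J. (\<Sum>x\<in>configs {1..n} d. (cmod (psi j x))\<^sup>2) = 1"
    and "\<forall>x\<in>configs {1..n} d. \<forall>y\<in>configs {1..n} d.
           rho x y = (\<Sum>j\<in>J. complex_of_real (p j) * proj (psi j) x y)"
    and "\<forall>j\<in>J. \<forall>i\<in>{1..n}. vec_space.rank d (single_red n d (proj (psi j)) i) \<le> k i"
  shows "C2 n d lam rho \<le> real d ^ n + real n - 1 - (\<Sum>i=1..n. real d / real (k i))"
proof -
  note a = assms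
  let ?S = "{1..n}"
  let ?B2 = "{A. A \<subseteq> ?S \<and> card A \<ge> 2}"
  let ?b = "real d ^ n + real n - 1 - (\<Sum>i=1..n. real d / real (k i))"
  let ?c = "\<lambda>j A I. Re (corr n d lam (proj (psi j)) A I)"
  have "C2 n d lam rho = (\<Sum>A\<in>?B2. \<Sum>I\<in>PiE A (\<lambda>_. {1..d\<^sup>2 - 1}). (\<Sum>j\<in>J. p j * ?c j A I)\<^sup>2)"
    unfolding C2_def tau_sq_def
  proof (intro sum.cong refl)
    fix A I assume "A \<in> ?B2"
    then have AS: "A \<subseteq> ?S" by simp
    show "(Re (corr n d lam rho A I))\<^sup>2 = (\<Sum>j\<in>J. p j * ?c j A I)\<^sup>2"
      using corr_mix[OF AS a(9), of lam I] by (simp add: Re_sum)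
  qed
  also have "\<dots> \<le> (\<Sum>A\<in>?B2. \<Sum>I\<in>PiE A (\<lambda>_. {1..d\<^sup>2 - 1}). \<Sum>j\<in>J. p j * (?c j A I)\<^sup>2)"
    by (intro sum_mono jensen_sq[OF a(5,6,7)])
  also have "\<dots> = (\<Sum>j\<in>J. p j * C2 n d lam (proj (psi j)))"
    unfolding C2_def tau_sq_def
    by (simp add: sum_distrib_left sum.swap[of _ J])
  also have "\<dots> \<le> (\<Sum>j\<in>J. p j * ?b)"
  proof (intro sum_mono mult_left_mono)
    fix j assume j: "j \<in> J"
    show "C2 n d lam (proj (psi j)) \<le> ?b"
      by (rule pure_bound[OF a(4) a(2) a(3)]) (use a(8) a(10) j in auto)
    show "0 \<le> p j" using a(6) j by simp
  qed
  also have "\<dots> = ?b" using a(7) by (simp add: sum_distrib_right[symmetric])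
  finally show ?thesis .
qed

end
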